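(* Let $\mathcal X$ be a coherent configuration on $\Omega$, let $\Pi$ be a generalized base of $\mathcal X$ and let $\alpha\in\Omega$. Put $\Omega'=\Omega\setminus\{\alpha\}$, let $\mathcal X'$ be the restriction of $\mathcal X_\alpha$ to $\Omega'$, and let $\Pi'=\{\Gamma\setminus\{\alpha\}:\Gamma\in\Pi\}$. Then $\Pi'$ is a generalized base of $\mathcal X'$.
   Context: A coherent configuration on a finite set $\Omega$ is a pair $\mathcal X=(\Omega,S)$ where $S$ is a partition of $\Omega\times\Omega$ such that $1_\Omega$ is a union of elements of $S$, $s^*=\{(\beta,\alpha):(\alpha,\beta)\in s\}\in S$ for $s\in S$, and for $r,s,t\in S$ the number $|\{\gamma:(\alpha,\gamma)\in r,(\gamma,\beta)\in s\}|$ is independent of $(\alpha,\beta)\in t$. Relations are unions of elements of $S$; fibers are sets $\Gamma$ with $1_\Gamma\in S$. A fission of $\mathcal X$ is a coherent configuration on $\Omega$ all of whose relations include those of $\mathcal X$. $\mathcal X$ is complete if every element of $S$ is a singleton. For $\Pi\subseteq 2^\Omega$, the $\Pi$-fission of $\mathcal X$ is the smallest fission in which every element of $\Pi$ is a union of fibers; $\Pi$ is a generalized base if its $\Pi$-fission is complete. $\mathcal X_\alpha$ denotes the $\{\{\alpha\}\}$-fission of $\mathcal X$ (so $\{\alpha\}$ and hence $\Omega\setminus\{\alpha\}$ are unions of fibers). For a union $\Gamma$ of fibers, the restriction $\mathcal X_\Gamma=(\Gamma,\{s\cap(\Gamma\times\Gamma):s\in S\}\setminus\{\emptyset\})$. 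*)

theory Defs
  imports Main
begin

text \<open>A coherent configuration is represented by its point set Omega and the
partition S of Omega x Omega into basis relations.\<close>

definition coherent_config :: "'a set \<Rightarrow> ('a \<times> 'a) set set \<Rightarrow> bool" where
  "coherent_config \<Omega> S \<longleftrightarrow>
     finite \<Omega> \<and>
     \<Union>S = \<Omega> \<times> \<Omega> \<and> {} \<notin> S \<and>
     (\<forall>s\<in>S. \<forall>t\<in>S. s \<noteq> t \<longrightarrow> s \<inter> t = {}) \<and>
     (\<exists>T\<subseteq>S. Id_on \<Omega> = \<Union>T) \<and>
     (\<forall>s\<in>S. converse s \<in> S) \<and>
     (\<forall>r\<in>S. \<forall>s\<in>S. \<forall>t\<in>S. \<forall>x\<in>t. \<forall>y\<in>t.
        card {c. (fst x, c) \<in> r \<and> (c, snd x) \<in> s} =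
        card {c. (fst y, c) \<in> r \<and> (c, snd y) \<in> s})"

definition is_relation :: "('a \<times> 'a) set set \<Rightarrow> ('a \<times> 'a) set \<Rightarrow> bool" where
  "is_relation S r \<longleftrightarrow> (\<exists>T\<subseteq>S. r = \<Union>T)"

definition is_fiber :: "('a \<times> 'a) set set \<Rightarrow> 'a set \<Rightarrow> bool" where
  "is_fiber S \<Gamma> \<longleftrightarrow> Id_on \<Gamma> \<in> S"

definition union_of_fibers :: "('a \<times> 'a) set set \<Rightarrow> 'a set \<Rightarrow> bool" where
  "union_of_fibers S \<Gamma> \<longleftrightarrow> (\<exists>F. (\<forall>\<Delta>\<in>F. is_fiber S \<Delta>) \<and> \<Gamma> = \<Union>F)"

definition is_fission :: "'a set \<Rightarrow> ('a \<times> 'a) set set \<Rightarrow> ('a \<times> 'a) set set \<Rightarrow> bool" where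
  "is_fission \<Omega> S S' \<longleftrightarrow> coherent_config \<Omega> S' \<and> (\<forall>r. is_relation S r \<longrightarrow> is_relation S' r)"

definition is_complete :: "('a \<times> 'a) set set \<Rightarrow> bool" where
  "is_complete S \<longleftrightarrow> (\<forall>s\<in>S. \<exists>p. s = {p})"

definition is_Pi_fission ::
  "'a set \<Rightarrow> ('a \<times> 'a) set set \<Rightarrow> 'a set set \<Rightarrow> ('a \<times> 'a) set set \<Rightarrow> bool" where
  "is_Pi_fission \<Omega> S \<Pi> S' \<longleftrightarrow>
     is_fission \<Omega> S S' \<and> (\<forall>\<Gamma>\<in>\<Pi>. union_of_fibers S' \<Gamma>) \<and>
     (\<forall>S''. is_fission \<Omega> S S'' \<and> (\<forall>\<Gamma>\<in>\<Pi>. union_of_fibers S'' \<Gamma>) \<longrightarrow> is_fission \<Omega> S' S'')"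

definition Pi_fission :: "'a set \<Rightarrow> ('a \<times> 'a) set set \<Rightarrow> 'a set set \<Rightarrow> ('a \<times> 'a) set set" where
  "Pi_fission \<Omega> S \<Pi> = (THE S'. is_Pi_fission \<Omega> S \<Pi> S')"

definition generalized_base :: "'a set \<Rightarrow> ('a \<times> 'a) set set \<Rightarrow> 'a set set \<Rightarrow> bool" where
  "generalized_base \<Omega> S \<Pi> \<longleftrightarrow> is_complete (Pi_fission \<Omega> S \<Pi>)"

definition point_ext :: "'a set \<Rightarrow> ('a \<times> 'a) set set \<Rightarrow> 'a \<Rightarrow> ('a \<times> 'a) set set" where
  "point_ext \<Omega> S \<alpha> = Pi_fission \<Omega> S {{\<alpha>}}"

definition restrict_cc :: "('a \<times> 'a) set set \<Rightarrow> 'a set \<Rightarrow> ('a \<times> 'a) set set" where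
  "restrict_cc S \<Gamma> = (\<lambda>s. s \<inter> (\<Gamma> \<times> \<Gamma>)) ` S - {{}}"

end

theory Submission
  imports Defs
begin

definition cnt :: "('a \<times> 'a) set \<Rightarrow> ('a \<times> 'a) set \<Rightarrow> 'a \<times> 'a \<Rightarrow> nat" where
  "cnt r s x = card {c. (fst x, c) \<in> r \<and> (c, snd x) \<in> s}"

lemma ccD:
  assumes "coherent_config \<Omega> S"
  shows "finite \<Omega>" "\<Union>S = \<Omega> \<times> \<Omega>" "{} \<notin> S"
    "\<And>s t. s \<in> S \<Longrightarrow> t \<in> S \<Longrightarrow> s \<noteq> t \<Longrightarrow> s \<inter> t = {}"
    "\<exists>T\<subseteq>S. Id_on \<Omega> = \<Union>T" "\<And>s. s \<in> S \<Longrightarrow> converse s \<in> S"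
    "\<And>r s t x y. r \<in> S \<Longrightarrow> s \<in> S \<Longrightarrow> t \<in> S \<Longrightarrow> x \<in> t \<Longrightarrow> y \<in> t \<Longrightarrow> cnt r s x = cnt r s y"
proof -
  note h = assms[unfolded coherent_config_def]
  note c2 = h[THEN conjunct2] note c3 = c2[THEN conjunct2] note c4 = c3[THEN conjunct2]
  note c5 = c4[THEN conjunct2] note c6 = c5[THEN conjunct2]
  show "finite \<Omega>" by (rule h[THEN conjunct1])
  show "\<Union>S = \<Omega> \<times> \<Omega>" by (rule c2[THEN conjunct1])
  show "{} \<notin> S" by (rule c3[THEN conjunct1])
  show "\<exists>T\<subseteq>S. Id_on \<Omega> = \<Union>T" by (rule c5[THEN conjunct1])
  show "\<And>s t. s \<in> S \<Longrightarrow> t \<in> S \<Longrightarrow> s \<noteq> t \<Longrightarrow> s \<inter> t = {}"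
    using c4[THEN conjunct1] by blast
  show "\<And>s. s \<in> S \<Longrightarrow> converse s \<in> S"
    using c6[THEN conjunct1] by blast
  show "\<And>r s t x y. r \<in> S \<Longrightarrow> s \<in> S \<Longrightarrow> t \<in> S \<Longrightarrow> x \<in> t \<Longrightarrow> y \<in> t \<Longrightarrow> cnt r s x = cnt r s y"
  proof -
    fix r s t x y assume a: "r \<in> S" "s \<in> S" "t \<in> S" "x \<in> t" "y \<in> t"
    have "\<forall>r\<in>S. \<forall>s\<in>S. \<forall>t\<in>S. \<forall>x\<in>t. \<forall>y\<in>t.
        card {c. (fst x, c) \<in> r \<and> (c, snd x) \<in> s} =
        card {c. (fst y, c) \<in> r \<and> (c, snd y) \<in> s}" by (rule c6[THEN conjunct2])
    then show "cnt r s x = cnt r s y" unfolding cnt_def using a by blast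
  qed
qed

lemma cc_sub: "coherent_config \<Omega> S \<Longrightarrow> s \<in> S \<Longrightarrow> s \<subseteq> \<Omega> \<times> \<Omega>"
  using ccD(2) by blast

lemma cc_same: "coherent_config \<Omega> S \<Longrightarrow> s \<in> S \<Longrightarrow> t \<in> S \<Longrightarrow> p \<in> s \<Longrightarrow> p \<in> t \<Longrightarrow> s = t"
  using ccD(4) by blast

lemma rel_char:
  assumes "\<Union>S = U" "\<And>s t. s \<in> S \<Longrightarrow> t \<in> S \<Longrightarrow> s \<noteq> t \<Longrightarrow> s \<inter> t = {}"
  shows "is_relation S r \<longleftrightarrow> r \<subseteq> U \<and> (\<forall>z\<in>S. z \<inter> r \<noteq> {} \<longrightarrow> z \<subseteq> r)"
proof
  assume "is_relation S r"
  then obtain T where T: "T \<subseteq> S" "r = \<Union>T" unfolding is_relation_def by blast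
  show "r \<subseteq> U \<and> (\<forall>z\<in>S. z \<inter> r \<noteq> {} \<longrightarrow> z \<subseteq> r)"
  proof
    show "r \<subseteq> U" using T assms(1) by blast
    show "\<forall>z\<in>S. z \<inter> r \<noteq> {} \<longrightarrow> z \<subseteq> r"
    proof (intro ballI impI)
      fix z assume z: "z \<in> S" "z \<inter> r \<noteq> {}"
      then obtain t where t: "t \<in> T" "z \<inter> t \<noteq> {}" using T(2) by blast
      have "t \<in> S" using t(1) T(1) by blast
      then have "z = t" using assms(2)[OF z(1)] t(2) by blast
      then show "z \<subseteq> r" using t(1) T(2) by blast
    qed
  qed
next
  assume h: "r \<subseteq> U \<and> (\<forall>z\<in>S. z \<inter> r \<noteq> {} \<longrightarrow> z \<subseteq> r)"
  have "r = \<Union>{z\<in>S. z \<subseteq> r}"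
  proof
    show "r \<subseteq> \<Union>{z\<in>S. z \<subseteq> r}"
    proof
      fix p assume p: "p \<in> r"
      then have "p \<in> \<Union>S" using h assms(1) by blast
      then obtain z where z: "z \<in> S" "p \<in> z" by blast
      then have "z \<inter> r \<noteq> {}" using p by blast
      then have "z \<subseteq> r" using h z(1) by blast
      then show "p \<in> \<Union>{z\<in>S. z \<subseteq> r}" using z by blast
    qed
  next
    show "\<Union>{z\<in>S. z \<subseteq> r} \<subseteq> r" by blast
  qed
  then show "is_relation S r" unfolding is_relation_def
    by (intro exI[of _ "{z\<in>S. z \<subseteq> r}"] conjI) auto
qed

lemma rel_cc: "coherent_config \<Omega> T \<Longrightarrow>
   is_relation T r \<longleftrightarrow> r \<subseteq> \<Omega> \<times> \<Omega> \<and> (\<forall>z\<in>T. z \<inter> r \<noteq> {} \<longrightarrow> z \<subseteq> r)"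
  by (rule rel_char[OF ccD(2) ccD(4)]) assumption+

lemma rel_Union: assumes "\<forall>r\<in>R. is_relation S r" shows "is_relation S (\<Union>R)"
  unfolding is_relation_def
proof (intro exI conjI)
  show "{s\<in>S. \<exists>r\<in>R. s \<subseteq> r} \<subseteq> S" by blast
  show "\<Union>R = \<Union>{s\<in>S. \<exists>r\<in>R. s \<subseteq> r}"
  proof
    show "\<Union>R \<subseteq> \<Union>{s\<in>S. \<exists>r\<in>R. s \<subseteq> r}"
    proof
      fix p assume "p \<in> \<Union>R"
      then obtain r where r: "r \<in> R" "p \<in> r" by blast
      have "is_relation S r" using assms r(1) by blast
      then obtain T where T: "T \<subseteq> S" "r = \<Union>T" unfolding is_relation_def by blast
      then obtain t where "t \<in> T" "p \<in> t" using r(2) by blast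
      then have "t \<in> {s\<in>S. \<exists>r\<in>R. s \<subseteq> r}" using T r(1) by blast
      then show "p \<in> \<Union>{s\<in>S. \<exists>r\<in>R. s \<subseteq> r}" using \<open>p \<in> t\<close> by blast
    qed
    next
    show "\<Union>{s\<in>S. \<exists>r\<in>R. s \<subseteq> r} \<subseteq> \<Union>R" by auto
  qed
qed

lemma rel_single: "s \<in> S \<Longrightarrow> is_relation S s"
  unfolding is_relation_def by (intro exI[of _ "{s}"]) auto

lemma rel_diff: assumes cc: "coherent_config \<Omega> T" and "is_relation T r1" "is_relation T r2"
  shows "is_relation T (r1 - r2)"
proof -
  have a1: "r1 \<subseteq> \<Omega> \<times> \<Omega>" "\<forall>z\<in>T. z \<inter> r1 \<noteq> {} \<longrightarrow> z \<subseteq> r1"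
    using assms(2) unfolding rel_cc[OF cc] by simp_all
  have a2: "\<forall>z\<in>T. z \<inter> r2 \<noteq> {} \<longrightarrow> z \<subseteq> r2"
    using assms(3) unfolding rel_cc[OF cc] by simp_all
  have "\<forall>z\<in>T. z \<inter> (r1 - r2) \<noteq> {} \<longrightarrow> z \<subseteq> r1 - r2"
  proof (intro ballI impI)
    fix z assume z: "z \<in> T" "z \<inter> (r1 - r2) \<noteq> {}"
    have "z \<inter> r1 \<noteq> {}" using z(2) by blast
    then have 1: "z \<subseteq> r1" using a1(2) z(1) by blast
    have "z \<inter> r2 = {}"
    proof (rule ccontr)
      assume "z \<inter> r2 \<noteq> {}"
      then have "z \<subseteq> r2" using a2 z(1) by blast
      then show False using z(2) by blast
    qed
    then show "z \<subseteq> r1 - r2" using 1 by blast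
  qed
  moreover have "r1 - r2 \<subseteq> \<Omega> \<times> \<Omega>" using a1(1) by blast
  ultimately show ?thesis unfolding rel_cc[OF cc] by simp
qed

lemma rel_Inter: assumes cc: "coherent_config \<Omega> T" and "R \<noteq> {}" "\<forall>r\<in>R. is_relation T r"
  shows "is_relation T (\<Inter>R)"
proof -
  have a: "\<forall>r\<in>R. r \<subseteq> \<Omega> \<times> \<Omega> \<and> (\<forall>z\<in>T. z \<inter> r \<noteq> {} \<longrightarrow> z \<subseteq> r)"
    using assms(3) unfolding rel_cc[OF cc] .
  obtain r0 where r0: "r0 \<in> R" using assms(2) by blast
  have 1: "\<Inter>R \<subseteq> \<Omega> \<times> \<Omega>" using a r0 by blast
  have "\<forall>z\<in>T. z \<inter> \<Inter>R \<noteq> {} \<longrightarrow> z \<subseteq> \<Inter>R"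
  proof (intro ballI impI)
    fix z assume z: "z \<in> T" "z \<inter> \<Inter>R \<noteq> {}"
    show "z \<subseteq> \<Inter>R"
    proof (rule Inter_greatest)
      fix r assume r: "r \<in> R"
      have "z \<inter> r \<noteq> {}" using z(2) r by blast
      then show "z \<subseteq> r" using a r z(1) by blast
    qed
  qed
  then show ?thesis unfolding rel_cc[OF cc] using 1 by simp
qed

lemma rel_conv: assumes cc: "coherent_config \<Omega> T" and rT: "is_relation T r" shows "is_relation T (converse r)"
proof -
  have h1: "r \<subseteq> \<Omega> \<times> \<Omega>" and h2: "\<forall>z\<in>T. z \<inter> r \<noteq> {} \<longrightarrow> z \<subseteq> r"
    using rT unfolding rel_cc[OF cc] by simp_all
  have "\<forall>z\<in>T. z \<inter> converse r \<noteq> {} \<longrightarrow> z \<subseteq> converse r"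
  proof (intro ballI impI)
    fix z assume z: "z \<in> T" "z \<inter> converse r \<noteq> {}"
    have c1: "converse z \<in> T" using ccD(6)[OF cc z(1)] .
    obtain a b where ab: "(a, b) \<in> z" "(a, b) \<in> converse r" using z(2) by auto
    then have "(b, a) \<in> converse z \<inter> r" by simp
    then have c2: "converse z \<inter> r \<noteq> {}" by blast
    have "converse z \<subseteq> r" using h2 c1 c2 by simp
    then show "z \<subseteq> converse r" by auto
  qed
  moreover have "converse r \<subseteq> \<Omega> \<times> \<Omega>" using h1 by auto
  ultimately show ?thesis unfolding rel_cc[OF cc] by simp
qed

lemma rel_Id: assumes cc: "coherent_config \<Omega> T" shows "is_relation T (Id_on \<Omega>)"
proof -
  obtain T0 where "T0 \<subseteq> T" "Id_on \<Omega> = \<Union>T0" using ccD(5)[OF cc] by blast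
  then show ?thesis unfolding is_relation_def by blast
qed

lemma rel_full: assumes cc: "coherent_config \<Omega> T" shows "is_relation T (\<Omega> \<times> \<Omega>)"
  unfolding is_relation_def by (intro exI[of _ T]) (simp add: ccD(2)[OF cc])

lemma cnt_fin: "coherent_config \<Omega> T \<Longrightarrow> r \<subseteq> \<Omega> \<times> \<Omega> \<Longrightarrow> finite {c. (a, c) \<in> r \<and> (c, b) \<in> s}"
  by (rule finite_subset[of _ \<Omega>]) (blast, erule ccD(1))

lemma finite_cc: "coherent_config \<Omega> T \<Longrightarrow> finite T"
proof -
  assume cc: "coherent_config \<Omega> T"
  have "T \<subseteq> Pow (\<Omega> \<times> \<Omega>)" using cc_sub[OF cc] by blast
  moreover have "finite (Pow (\<Omega> \<times> \<Omega>))" using ccD(1)[OF cc] by simp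
  ultimately show "finite T" by (rule finite_subset)
qed

lemma cnt_sum:
  assumes cc: "coherent_config \<Omega> T" and r: "is_relation T r" and s: "is_relation T s"
  shows "cnt r s x = (\<Sum>(a,b)\<in>{a\<in>T. a \<subseteq> r} \<times> {b\<in>T. b \<subseteq> s}. cnt a b x)"
proof -
  let ?I = "{a\<in>T. a \<subseteq> r} \<times> {b\<in>T. b \<subseteq> s}"
  let ?A = "\<lambda>(a,b). {c. (fst x, c) \<in> a \<and> (c, snd x) \<in> b}"
  have rr: "r \<subseteq> \<Omega> \<times> \<Omega>" "\<forall>z\<in>T. z \<inter> r \<noteq> {} \<longrightarrow> z \<subseteq> r" using r rel_cc[OF cc] by blast+
  have ss: "s \<subseteq> \<Omega> \<times> \<Omega>" "\<forall>z\<in>T. z \<inter> s \<noteq> {} \<longrightarrow> z \<subseteq> s" using s rel_cc[OF cc] by blast+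
  have finT: "finite T" by (rule finite_cc[OF cc])
  have eq: "{c. (fst x, c) \<in> r \<and> (c, snd x) \<in> s} = \<Union>(?A ` ?I)"
  proof
    show "{c. (fst x, c) \<in> r \<and> (c, snd x) \<in> s} \<subseteq> \<Union>(?A ` ?I)"
    proof
      fix c assume c: "c \<in> {c. (fst x, c) \<in> r \<and> (c, snd x) \<in> s}"
      then have c1: "(fst x, c) \<in> \<Union>T" "(c, snd x) \<in> \<Union>T" using rr(1) ss(1) ccD(2)[OF cc] by auto
      then obtain a where a: "a \<in> T" "(fst x, c) \<in> a" by blast
      obtain b where b: "b \<in> T" "(c, snd x) \<in> b" using c1 by blast
      have "a \<inter> r \<noteq> {}" using a c by blast
      then have ar: "a \<subseteq> r" using rr(2) a(1) by blast
      have "b \<inter> s \<noteq> {}" using b c by blast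
      then have bs: "b \<subseteq> s" using ss(2) b(1) by blast
      have "(a, b) \<in> ?I" using a(1) b(1) ar bs by blast
      moreover have "c \<in> ?A (a, b)" using a b by simp
      ultimately show "c \<in> \<Union>(?A ` ?I)" by blast
    qed
  next
    show "\<Union>(?A ` ?I) \<subseteq> {c. (fst x, c) \<in> r \<and> (c, snd x) \<in> s}" by auto
  qed
  have "card (\<Union>(?A ` ?I)) = (\<Sum>i\<in>?I. card (?A i))"
  proof (rule card_UN_disjoint)
    show "finite ?I" using finT by simp
    show "\<forall>i\<in>?I. finite (?A i)"
    proof
      fix i assume "i \<in> ?I"
      obtain a b where ab0: "i = (a, b)" by (cases i)
      have ab: "i = (a, b)" "a \<in> T" using ab0 \<open>i \<in> ?I\<close> by simp_all
      have "a \<subseteq> \<Omega> \<times> \<Omega>" by (rule cc_sub[OF cc ab(2)])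
      from cnt_fin[OF cc this] show "finite (?A i)" unfolding ab by simp
    qed
    show "\<forall>i\<in>?I. \<forall>j\<in>?I. i \<noteq> j \<longrightarrow> ?A i \<inter> ?A j = {}"
    proof (intro ballI impI)
      fix i j assume i: "i \<in> ?I" and j: "j \<in> ?I" and ij: "i \<noteq> j"
      obtain a b where ab: "i = (a, b)" by (cases i)
      obtain a' b' where ab': "j = (a', b')" by (cases j)
      have T4: "a \<in> T" "b \<in> T" "a' \<in> T" "b' \<in> T" using i j ab ab' by simp_all
      show "?A i \<inter> ?A j = {}"
      proof (rule ccontr)
        assume "?A i \<inter> ?A j \<noteq> {}"
        then obtain c where "(fst x, c) \<in> a" "(c, snd x) \<in> b" "(fst x, c) \<in> a'" "(c, snd x) \<in> b'"
          unfolding ab ab' by auto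
        then have "a = a'" "b = b'" using cc_same[OF cc] T4 by blast+
        then show False using ij ab ab' by simp
      qed
    qed
  qed
  then show ?thesis using eq unfolding cnt_def by (simp add: case_prod_beta)
qed

lemma cnt_const:
  assumes cc: "coherent_config \<Omega> T" and r: "is_relation T r" and s: "is_relation T s"
    and z: "z \<in> T" "p \<in> z" "q \<in> z"
  shows "cnt r s p = cnt r s q"
  unfolding cnt_sum[OF assms(1-3)]
  by (rule sum.cong) (use ccD(7)[OF cc _ _ z] in auto)

lemma rel_level:
  assumes cc: "coherent_config \<Omega> T" and r: "is_relation T r" and s: "is_relation T s"
  shows "is_relation T {p\<in>\<Omega>\<times>\<Omega>. cnt r s p = k}"
  unfolding rel_cc[OF cc]
proof (intro conjI ballI impI)
  fix z assume z: "z \<in> T" "z \<inter> {p \<in> \<Omega> \<times> \<Omega>. cnt r s p = k} \<noteq> {}"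
  then obtain p where p: "p \<in> z" "cnt r s p = k" by blast
  show "z \<subseteq> {p \<in> \<Omega> \<times> \<Omega>. cnt r s p = k}"
  proof
    fix q assume q: "q \<in> z"
    have "cnt r s q = k" using cnt_const[OF cc r s z(1) q p(1)] p(2) by simp
    then show "q \<in> {p \<in> \<Omega> \<times> \<Omega>. cnt r s p = k}" using q cc_sub[OF cc z(1)] by blast
  qed
qed auto

definition compl :: "'a set \<Rightarrow> ('a \<times> 'a) set set" where
  "compl \<Omega> = (\<lambda>p. {p}) ` (\<Omega> \<times> \<Omega>)"

lemma cc_compl: assumes fin: "finite \<Omega>" shows "coherent_config \<Omega> (compl \<Omega>)"
  unfolding coherent_config_def
proof (intro conjI)
  show "finite \<Omega>" by (rule fin)
  show "\<Union>(compl \<Omega>) = \<Omega> \<times> \<Omega>" unfolding compl_def by auto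
  show "{} \<notin> compl \<Omega>" unfolding compl_def by auto
  show "\<forall>s\<in>compl \<Omega>. \<forall>t\<in>compl \<Omega>. s \<noteq> t \<longrightarrow> s \<inter> t = {}" unfolding compl_def by auto
  show "\<exists>T\<subseteq>compl \<Omega>. Id_on \<Omega> = \<Union>T"
  proof (intro exI conjI)
    show "(\<lambda>x. {(x, x)}) ` \<Omega> \<subseteq> compl \<Omega>" unfolding compl_def by auto
    show "Id_on \<Omega> = \<Union>((\<lambda>x. {(x, x)}) ` \<Omega>)" unfolding Id_on_def by auto
  qed
  show "\<forall>s\<in>compl \<Omega>. s\<inverse> \<in> compl \<Omega>" unfolding compl_def by auto
  show "\<forall>r\<in>compl \<Omega>. \<forall>s\<in>compl \<Omega>. \<forall>t\<in>compl \<Omega>. \<forall>x\<in>t. \<forall>y\<in>t.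
        card {c. (fst x, c) \<in> r \<and> (c, snd x) \<in> s} = card {c. (fst y, c) \<in> r \<and> (c, snd y) \<in> s}"
  proof (intro ballI)
    fix r s t x y assume "t \<in> compl \<Omega>" "x \<in> t" "y \<in> t"
    then have "x = y" unfolding compl_def by auto
    then show "card {c. (fst x, c) \<in> r \<and> (c, snd x) \<in> s} = card {c. (fst y, c) \<in> r \<and> (c, snd y) \<in> s}"
      by simp
  qed
qed

lemma compl_rel: assumes "r \<subseteq> \<Omega> \<times> \<Omega>" shows "is_relation (compl \<Omega>) r"
  unfolding is_relation_def
proof (intro exI conjI)
  show "(\<lambda>p. {p}) ` r \<subseteq> compl \<Omega>" unfolding compl_def using assms by auto
  show "r = \<Union>((\<lambda>p. {p}) ` r)" by auto
qed

lemma compl_fiber: assumes "\<Gamma> \<subseteq> \<Omega>" shows "union_of_fibers (compl \<Omega>) \<Gamma>"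
  unfolding union_of_fibers_def
proof (intro exI conjI)
  show "\<forall>\<Delta>\<in>(\<lambda>x. {x}) ` \<Gamma>. is_fiber (compl \<Omega>) \<Delta>"
    unfolding is_fiber_def compl_def using assms by auto
  show "\<Gamma> = \<Union>((\<lambda>x. {x}) ` \<Gamma>)" by auto
qed

lemma Id_fst: assumes "A \<subseteq> Id_on G" shows "Id_on (fst ` A) = A"
proof
  show "Id_on (fst ` A) \<subseteq> A"
  proof
    fix q assume "q \<in> Id_on (fst ` A)"
    then obtain x where x: "q = (x, x)" "x \<in> fst ` A" by (auto simp: Id_on_def)
    then obtain y where "(x, y) \<in> A" by force
    moreover then have "y = x" using assms by (auto simp: Id_on_def)
    ultimately show "q \<in> A" using x by simp
  qed
  show "A \<subseteq> Id_on (fst ` A)"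
  proof
    fix q assume q: "q \<in> A"
    then obtain x where x: "q = (x, x)" using assms by (auto simp: Id_on_def)
    then have "x \<in> fst ` A" using q by force
    then show "q \<in> Id_on (fst ` A)" unfolding x(1) by (rule Id_onI)
  qed
qed
lemma fst_Id: "A \<subseteq> Id_on G \<Longrightarrow> fst ` A \<subseteq> G"
  by (auto simp: Id_on_def)

lemma rel_sub: "coherent_config \<Omega> S \<Longrightarrow> is_relation S r \<Longrightarrow> r \<subseteq> \<Omega> \<times> \<Omega>"
  using rel_cc by blast

lemma fibers_rel: assumes cc: "coherent_config \<Omega> T" and u: "union_of_fibers T \<Gamma>"
  shows "is_relation T (Id_on \<Gamma>)"
proof -
  obtain F where F: "\<forall>\<Delta>\<in>F. is_fiber T \<Delta>" "\<Gamma> = \<Union>F" using u unfolding union_of_fibers_def by blast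
  have "Id_on \<Gamma> = \<Union>((\<lambda>\<Delta>. Id_on \<Delta>) ` F)" using F(2) by auto
  moreover have "\<forall>r\<in>(\<lambda>\<Delta>. Id_on \<Delta>) ` F. is_relation T r"
    using F(1) rel_single unfolding is_fiber_def by blast
  ultimately show ?thesis using rel_Union by metis
qed

lemma fission_unique:
  assumes "is_fission \<Omega> A B" "is_fission \<Omega> B A"
  shows "A = B"
proof -
  have ccA: "coherent_config \<Omega> A" and ccB: "coherent_config \<Omega> B"
    using assms unfolding is_fission_def by simp_all
  have AB: "\<And>r. is_relation A r \<Longrightarrow> is_relation B r" and BA: "\<And>r. is_relation B r \<Longrightarrow> is_relation A r"
    using assms unfolding is_fission_def by simp_all
  have key: "a \<in> Y" if ccX: "coherent_config \<Omega> X" and ccY: "coherent_config \<Omega> Y"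
    and XY: "\<And>r. is_relation X r \<Longrightarrow> is_relation Y r" and YX: "\<And>r. is_relation Y r \<Longrightarrow> is_relation X r"
    and a: "a \<in> X" for X Y a
  proof -
    have "a \<noteq> {}" using ccD(3)[OF ccX] a by blast
    then obtain p where p: "p \<in> a" by blast
    have "p \<in> \<Union>Y" using p cc_sub[OF ccX a] ccD(2)[OF ccY] by blast
    then obtain b where b: "b \<in> Y" "p \<in> b" by blast
    have ra: "is_relation Y a" using XY rel_single[OF a] by blast
    have "b \<subseteq> a" using ra b p unfolding rel_cc[OF ccY] by blast
    moreover have rb: "is_relation X b" using YX rel_single[OF b(1)] by blast
    have "a \<subseteq> b" using rb a b p unfolding rel_cc[OF ccX] by blast
    ultimately have "a = b" by blast
    then show "a \<in> Y" using b by simp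
  qed
  show "A = B"
  proof
    show "A \<subseteq> B" using key[OF ccA ccB AB BA] by blast
    show "B \<subseteq> A" using key[OF ccB ccA BA AB] by blast
  qed
qed

lemma Pi_unique: "is_Pi_fission \<Omega> S \<Pi> A \<Longrightarrow> is_Pi_fission \<Omega> S \<Pi> B \<Longrightarrow> A = B"
  unfolding is_Pi_fission_def by (intro fission_unique) blast+

locale clos =
  fixes \<Omega> :: "'a set" and S :: "('a \<times> 'a) set set" and \<Pi> :: "'a set set"
  assumes cc: "coherent_config \<Omega> S" and sub: "\<Pi> \<subseteq> Pow \<Omega>"
begin

definition Fam where "Fam = {T. is_fission \<Omega> S T \<and> (\<forall>\<Gamma>\<in>\<Pi>. union_of_fibers T \<Gamma>)}"
definition BB where "BB = {r. \<forall>T\<in>Fam. is_relation T r}"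
definition At where "At p = \<Inter>{r\<in>BB. p \<in> r}"
definition W where "W = At ` (\<Omega> \<times> \<Omega>)"

lemma Fam_cc: "T \<in> Fam \<Longrightarrow> coherent_config \<Omega> T"
  unfolding Fam_def is_fission_def by simp

lemma compl_Fam: "compl \<Omega> \<in> Fam"
  unfolding Fam_def is_fission_def
proof (intro CollectI conjI allI impI ballI)
  show "coherent_config \<Omega> (compl \<Omega>)" using cc_compl ccD(1)[OF cc] by blast
  fix r assume "is_relation S r"
  then show "is_relation (compl \<Omega>) r" using compl_rel rel_sub[OF cc] by blast
next
  fix \<Gamma> assume "\<Gamma> \<in> \<Pi>"
  then show "union_of_fibers (compl \<Omega>) \<Gamma>" using compl_fiber sub by blast
qed

lemma BB_sub: "r \<in> BB \<Longrightarrow> r \<subseteq> \<Omega> \<times> \<Omega>"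
  unfolding BB_def using compl_Fam rel_sub[OF Fam_cc[OF compl_Fam]] by blast

lemma BB_full: "\<Omega> \<times> \<Omega> \<in> BB"
  unfolding BB_def using rel_full Fam_cc by blast

lemma BB_Id: "Id_on \<Omega> \<in> BB"
  unfolding BB_def using rel_Id Fam_cc by blast

lemma BB_diff: "r1 \<in> BB \<Longrightarrow> r2 \<in> BB \<Longrightarrow> r1 - r2 \<in> BB"
  unfolding BB_def using rel_diff Fam_cc by blast

lemma BB_conv: "r \<in> BB \<Longrightarrow> converse r \<in> BB"
  unfolding BB_def using rel_conv Fam_cc by blast

lemma BB_Inter: assumes "R \<noteq> {}" "R \<subseteq> BB" shows "\<Inter>R \<in> BB"
  unfolding BB_def
proof (intro CollectI ballI)
  fix T assume T: "T \<in> Fam"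
  have "\<forall>r\<in>R. is_relation T r" using assms(2) T unfolding BB_def by blast
  then show "is_relation T (\<Inter>R)" using rel_Inter[OF Fam_cc[OF T] assms(1)] by blast
qed

lemma BB_level: "r \<in> BB \<Longrightarrow> s \<in> BB \<Longrightarrow> {p\<in>\<Omega>\<times>\<Omega>. cnt r s p = k} \<in> BB"
  unfolding BB_def using rel_level Fam_cc by blast

lemma At_BB: assumes "p \<in> \<Omega> \<times> \<Omega>" shows "At p \<in> BB"
  unfolding At_def
proof (rule BB_Inter)
  show "{r \<in> BB. p \<in> r} \<noteq> {}" using BB_full assms by blast
qed blast

lemma At_in: "p \<in> \<Omega> \<times> \<Omega> \<Longrightarrow> p \<in> At p"
  unfolding At_def by blast

lemma At_least: "r \<in> BB \<Longrightarrow> p \<in> r \<Longrightarrow> At p \<subseteq> r"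
  unfolding At_def by blast

lemma At_eq: assumes p: "p \<in> \<Omega> \<times> \<Omega>" and q: "q \<in> At p" shows "At q = At p"
proof -
  have qO: "q \<in> \<Omega> \<times> \<Omega>" using BB_sub[OF At_BB[OF p]] q by blast
  have 1: "At q \<subseteq> At p" using At_least[OF At_BB[OF p] q] .
  have "p \<in> At q"
  proof (rule ccontr)
    assume "p \<notin> At q"
    then have "p \<in> At p - At q" using At_in[OF p] by blast
    moreover have "At p - At q \<in> BB" using BB_diff At_BB p qO by blast
    ultimately have "At p \<subseteq> At p - At q" using At_least by blast
    then show False using q At_in[OF qO] by blast
  qed
  then have "At p \<subseteq> At q" using At_least[OF At_BB[OF qO]] by blast
  then show ?thesis using 1 by blast
qed

lemma W_sub: "w \<in> W \<Longrightarrow> w \<in> BB"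
  unfolding W_def using At_BB by blast

lemma W_disj: assumes "w1 \<in> W" "w2 \<in> W" "w1 \<inter> w2 \<noteq> {}" shows "w1 = w2"
proof -
  obtain p1 where p1: "p1 \<in> \<Omega> \<times> \<Omega>" "w1 = At p1" using assms(1) unfolding W_def by blast
  obtain p2 where p2: "p2 \<in> \<Omega> \<times> \<Omega>" "w2 = At p2" using assms(2) unfolding W_def by blast
  obtain q where q: "q \<in> At p1" "q \<in> At p2" using assms(3) p1 p2 by blast
  have "At q = At p1" using At_eq[OF p1(1) q(1)] .
  moreover have "At q = At p2" using At_eq[OF p2(1) q(2)] .
  ultimately show ?thesis using p1 p2 by simp
qed

lemma rel_BB: assumes "r \<in> BB" shows "is_relation W r"
  unfolding is_relation_def
proof (intro exI conjI)
  show "At ` r \<subseteq> W" unfolding W_def using BB_sub[OF assms] by blast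
  show "r = \<Union>(At ` r)"
  proof
    show "r \<subseteq> \<Union>(At ` r)" using At_in BB_sub[OF assms] by blast
    show "\<Union>(At ` r) \<subseteq> r" using At_least[OF assms] by blast
  qed
qed

lemma W_cc: "coherent_config \<Omega> W"
  unfolding coherent_config_def
proof (intro conjI)
  show "finite \<Omega>" using ccD(1)[OF cc] .
  show "\<Union>W = \<Omega> \<times> \<Omega>"
  proof
    show "\<Union>W \<subseteq> \<Omega> \<times> \<Omega>" using W_sub BB_sub by blast
    show "\<Omega> \<times> \<Omega> \<subseteq> \<Union>W" unfolding W_def using At_in by blast
  qed
  show "{} \<notin> W" unfolding W_def using At_in by blast
  show "\<forall>s\<in>W. \<forall>t\<in>W. s \<noteq> t \<longrightarrow> s \<inter> t = {}" using W_disj by blast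
  show "\<exists>T\<subseteq>W. Id_on \<Omega> = \<Union>T"
    using rel_BB[OF BB_Id] unfolding is_relation_def .
  show "\<forall>s\<in>W. s\<inverse> \<in> W"
  proof
    fix s assume "s \<in> W"
    then obtain p where p: "p \<in> \<Omega> \<times> \<Omega>" "s = At p" unfolding W_def by blast
    obtain a b where ab: "p = (a, b)" by (cases p)
    have q: "(b, a) \<in> \<Omega> \<times> \<Omega>" using p ab by blast
    have 1: "At (b, a) \<subseteq> converse (At p)"
      by (rule At_least) (use BB_conv At_BB[OF p(1)] At_in[OF p(1)] ab in auto)
    have "At p \<subseteq> converse (At (b, a))"
      by (rule At_least) (use BB_conv At_BB[OF q] At_in[OF q] ab in auto)
    then have "converse (At p) = At (b, a)" using 1 by auto
    then show "s\<inverse> \<in> W" unfolding W_def using p q by auto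
  qed
  show "\<forall>r\<in>W. \<forall>s\<in>W. \<forall>t\<in>W. \<forall>x\<in>t. \<forall>y\<in>t.
        card {c. (fst x, c) \<in> r \<and> (c, snd x) \<in> s} = card {c. (fst y, c) \<in> r \<and> (c, snd y) \<in> s}"
  proof (intro ballI)
    fix r s t x y assume r: "r \<in> W" and s: "s \<in> W" and t: "t \<in> W" and x: "x \<in> t" and y: "y \<in> t"
    obtain p where p: "p \<in> \<Omega> \<times> \<Omega>" "t = At p" using t unfolding W_def by blast
    define K where "K = {q\<in>\<Omega>\<times>\<Omega>. cnt r s q = cnt r s x}"
    have K: "K \<in> BB" unfolding K_def using BB_level W_sub r s by blast
    have xO: "x \<in> \<Omega> \<times> \<Omega>" using x p BB_sub[OF At_BB[OF p(1)]] by blast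
    have "x \<in> K" unfolding K_def using xO by blast
    then have "At x \<subseteq> K" using At_least[OF K] by blast
    moreover have "At x = t" using At_eq[OF p(1)] x p by simp
    ultimately have "y \<in> K" using y by blast
    then have "cnt r s y = cnt r s x" unfolding K_def by blast
    then show "card {c. (fst x, c) \<in> r \<and> (c, snd x) \<in> s} = card {c. (fst y, c) \<in> r \<and> (c, snd y) \<in> s}"
      unfolding cnt_def by simp
  qed
qed

lemma W_Pi: "is_Pi_fission \<Omega> S \<Pi> W"
  unfolding is_Pi_fission_def
proof (intro conjI allI impI ballI)
  show "is_fission \<Omega> S W" unfolding is_fission_def
  proof (intro conjI allI impI)
    show "coherent_config \<Omega> W" by (rule W_cc)
    fix r assume "is_relation S r"
    then have "r \<in> BB" unfolding BB_def Fam_def is_fission_def by blast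
    then show "is_relation W r" by (rule rel_BB)
  qed
next
  fix \<Gamma> assume G: "\<Gamma> \<in> \<Pi>"
  have GO: "\<Gamma> \<subseteq> \<Omega>" using G sub by blast
  have IB: "Id_on \<Gamma> \<in> BB" unfolding BB_def
    using G fibers_rel Fam_cc unfolding Fam_def by blast
  show "union_of_fibers W \<Gamma>" unfolding union_of_fibers_def
  proof (intro exI conjI)
    show "\<forall>\<Delta>\<in>(\<lambda>p. fst ` At p) ` Id_on \<Gamma>. is_fiber W \<Delta>"
    proof
      fix \<Delta> assume "\<Delta> \<in> (\<lambda>p. fst ` At p) ` Id_on \<Gamma>"
      then obtain p where p: "p \<in> Id_on \<Gamma>" "\<Delta> = fst ` At p" by blast
      have pO: "p \<in> \<Omega> \<times> \<Omega>" using p(1) GO by blast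
      have "At p \<subseteq> Id_on \<Gamma>" using At_least[OF IB p(1)] .
      then have "Id_on \<Delta> = At p" unfolding p(2) by (rule Id_fst)
      then show "is_fiber W \<Delta>" unfolding is_fiber_def W_def using pO by simp
    qed
    show "\<Gamma> = \<Union>((\<lambda>p. fst ` At p) ` Id_on \<Gamma>)"
    proof
      show "\<Gamma> \<subseteq> \<Union>((\<lambda>p. fst ` At p) ` Id_on \<Gamma>)"
      proof
        fix x assume x: "x \<in> \<Gamma>"
        then have "(x, x) \<in> At (x, x)" using At_in GO by blast
        then have "x \<in> fst ` At (x, x)" by force
        then show "x \<in> \<Union>((\<lambda>p. fst ` At p) ` Id_on \<Gamma>)" using x by blast
      qed
      show "\<Union>((\<lambda>p. fst ` At p) ` Id_on \<Gamma>) \<subseteq> \<Gamma>"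
      proof (rule UN_least)
        fix p assume "p \<in> Id_on \<Gamma>"
        then show "fst ` At p \<subseteq> \<Gamma>" using fst_Id[OF At_least[OF IB]] by blast
      qed
    qed
  qed
next
  fix S'' assume h: "is_fission \<Omega> S S'' \<and> (\<forall>\<Gamma>\<in>\<Pi>. union_of_fibers S'' \<Gamma>)"
  then have F: "S'' \<in> Fam" unfolding Fam_def by blast
  show "is_fission \<Omega> W S''" unfolding is_fission_def
  proof (intro conjI allI impI)
    show "coherent_config \<Omega> S''" using Fam_cc[OF F] .
    fix r assume "is_relation W r"
    then obtain T where T: "T \<subseteq> W" "r = \<Union>T" unfolding is_relation_def by blast
    have "\<forall>t\<in>T. is_relation S'' t" using T(1) W_sub F unfolding BB_def by blast
    then show "is_relation S'' r" using rel_Union T(2) by blast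
  qed
qed

end

lemma Pi_fission_ok:
  assumes "coherent_config \<Omega> S" "\<Pi> \<subseteq> Pow \<Omega>"
  shows "is_Pi_fission \<Omega> S \<Pi> (Pi_fission \<Omega> S \<Pi>)"
proof -
  interpret clos \<Omega> S \<Pi> using assms by unfold_locales
  show ?thesis unfolding Pi_fission_def
    by (rule theI[of _ W]) (use W_Pi Pi_unique in blast)+
qed

lemma fib_exists: assumes cc: "coherent_config \<Omega> T" and x: "x \<in> \<Omega>"
  shows "\<exists>\<Delta>. Id_on \<Delta> \<in> T \<and> x \<in> \<Delta>"
proof -
  obtain T0 where T0: "T0 \<subseteq> T" "Id_on \<Omega> = \<Union>T0" using ccD(5)[OF cc] by blast
  have "(x, x) \<in> \<Union>T0" using x T0(2) by blast
  then obtain t where t: "t \<in> T0" "(x, x) \<in> t" by blast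
  have ts: "t \<subseteq> Id_on \<Omega>" using t(1) T0(2) by blast
  have "Id_on (fst ` t) = t" by (rule Id_fst[OF ts])
  moreover have "x \<in> fst ` t" using t(2) by force
  ultimately show ?thesis using t(1) T0(1) by (intro exI[of _ "fst ` t"]) auto
qed

lemma cnt_posI: assumes cc: "coherent_config \<Omega> T" and r: "r \<in> T" and "(a, c) \<in> r" "(c, b) \<in> s"
  shows "cnt r s (a, b) > 0"
proof -
  have "finite {c. (a, c) \<in> r \<and> (c, b) \<in> s}" using cnt_fin[OF cc cc_sub[OF cc r]] .
  moreover have "c \<in> {c. (a, c) \<in> r \<and> (c, b) \<in> s}" using assms(3,4) by simp
  ultimately show ?thesis unfolding cnt_def by (auto simp: card_gt_0_iff)
qed

lemma cnt_posD: assumes "cnt r s (a, b) > 0" shows "\<exists>c. (a, c) \<in> r \<and> (c, b) \<in> s"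
proof -
  have "{c. (a, c) \<in> r \<and> (c, b) \<in> s} \<noteq> {}" using assms unfolding cnt_def by (metis card.empty less_irrefl fst_conv snd_conv)
  then show ?thesis by blast
qed

lemma fib_fst: assumes cc: "coherent_config \<Omega> T" and t: "t \<in> T" and xy: "(x, y) \<in> t" and xy': "(x', y') \<in> t"
  and D: "Id_on \<Delta> \<in> T" and x: "x \<in> \<Delta>"
  shows "x' \<in> \<Delta>"
proof -
  have "cnt (Id_on \<Delta>) t (x, y) > 0" using cnt_posI[OF cc D _ xy] x by blast
  moreover have "cnt (Id_on \<Delta>) t (x, y) = cnt (Id_on \<Delta>) t (x', y')" using ccD(7)[OF cc D t t xy xy'] .
  ultimately have "cnt (Id_on \<Delta>) t (x', y') > 0" by simp
  from cnt_posD[OF this] obtain c where "(x', c) \<in> Id_on \<Delta>" by blast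
  then show ?thesis by blast
qed

lemma fib_snd: assumes cc: "coherent_config \<Omega> T" and t: "t \<in> T" and xy: "(x, y) \<in> t" and xy': "(x', y') \<in> t"
  and D: "Id_on \<Delta> \<in> T" and y: "y \<in> \<Delta>"
  shows "y' \<in> \<Delta>"
proof -
  have "(y, y) \<in> Id_on \<Delta>" using y by blast
  then have "cnt t (Id_on \<Delta>) (x, y) > 0" using cnt_posI[OF cc t xy] by blast
  moreover have "cnt t (Id_on \<Delta>) (x, y) = cnt t (Id_on \<Delta>) (x', y')" using ccD(7)[OF cc t D t xy xy'] .
  ultimately have "cnt t (Id_on \<Delta>) (x', y') > 0" by simp
  from cnt_posD[OF this] obtain c where "(c, y') \<in> Id_on \<Delta>" by blast
  then show ?thesis by blast
qed

lemma Id_on_inj: "Id_on A = Id_on B \<Longrightarrow> A = B"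
proof -
  assume h: "Id_on A = Id_on B"
  have "\<And>x. x \<in> A \<longleftrightarrow> x \<in> B"
  proof -
    fix x
    have "x \<in> A \<longleftrightarrow> (x, x) \<in> Id_on A" by blast
    also have "\<dots> \<longleftrightarrow> (x, x) \<in> Id_on B" using h by simp
    also have "\<dots> \<longleftrightarrow> x \<in> B" by blast
    finally show "x \<in> A \<longleftrightarrow> x \<in> B" .
  qed
  then show "A = B" by blast
qed

lemma fib_disj: assumes cc: "coherent_config \<Omega> T" and "Id_on \<Delta> \<in> T" "Id_on \<Delta>' \<in> T" "x \<in> \<Delta>" "x \<in> \<Delta>'"
  shows "\<Delta> = \<Delta>'"
proof -
  have "(x, x) \<in> Id_on \<Delta>" "(x, x) \<in> Id_on \<Delta>'" using assms(4,5) by blast+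
  then have "Id_on \<Delta> = Id_on \<Delta>'" using cc_same[OF cc assms(2,3)] by blast
  then show ?thesis by (rule Id_on_inj)
qed

lemma ptC: assumes cc: "coherent_config \<Omega> P" and a: "Id_on {\<alpha>} \<in> P" and p: "p \<in> P" and ay: "(\<alpha>, y) \<in> p"
  and F: "Id_on \<Phi> \<in> P" and y: "y \<in> \<Phi>" and y': "y' \<in> \<Phi>"
  shows "(\<alpha>, y') \<in> p"
proof -
  have pc: "converse p \<in> P" using ccD(6)[OF cc p] .
  have "(y, \<alpha>) \<in> converse p" using ay by simp
  then have "cnt (converse p) p (y, y) > 0" using cnt_posI[OF cc pc _ ay] by blast
  moreover have "cnt (converse p) p (y, y) = cnt (converse p) p (y', y')"
    using ccD(7)[OF cc pc p F] y y' by blast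
  ultimately have "cnt (converse p) p (y', y') > 0" by simp
  from cnt_posD[OF this] obtain c where c: "(c, y') \<in> p" by blast
  have "\<alpha> \<in> {\<alpha>}" by simp
  have "c \<in> {\<alpha>}" by (rule fib_fst[OF cc p ay c a \<open>\<alpha> \<in> {\<alpha>}\<close>])
  then show ?thesis using c by simp
qed

lemma cntB: assumes cc: "coherent_config \<Omega> Y" and r: "r \<in> Y" and G: "Id_on \<Gamma> \<in> Y" and D: "Id_on \<Delta> \<in> Y"
  and x: "x \<in> \<Delta>" and x': "x' \<in> \<Delta>"
  shows "card {c\<in>\<Gamma>. (x, c) \<in> r} = card {c\<in>\<Gamma>. (x', c) \<in> r}"
proof (cases "\<exists>a b. (a, b) \<in> r \<and> b \<in> \<Gamma>")
  case True
  then obtain a b where ab: "(a, b) \<in> r" "b \<in> \<Gamma>" by blast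
  have all: "\<And>u v. (u, v) \<in> r \<Longrightarrow> v \<in> \<Gamma>" using fib_snd[OF cc r ab(1) _ G ab(2)] by blast
  have eq: "\<And>z. {c\<in>\<Gamma>. (z, c) \<in> r} = {c. (z, c) \<in> r \<and> (c, z) \<in> converse r}" using all by blast
  have rc: "converse r \<in> Y" using ccD(6)[OF cc r] .
  have "cnt r (converse r) (x, x) = cnt r (converse r) (x', x')"
    using ccD(7)[OF cc r rc D] x x' by blast
  then show ?thesis unfolding eq cnt_def by simp
next
  case False
  then have e: "\<And>z. {c\<in>\<Gamma>. (z, c) \<in> r} = {}" by blast
  show ?thesis by (simp only: e)
qed

locale ext =
  fixes \<Omega>' :: "'a set" and Y :: "('a \<times> 'a) set set" and \<alpha> :: 'a
  assumes ccY: "coherent_config \<Omega>' Y" and notin: "\<alpha> \<notin> \<Omega>'"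
begin

definition Fb where "Fb = {\<Delta>. Id_on \<Delta> \<in> Y}"
definition Z where "Z = Y \<union> {{(\<alpha>, \<alpha>)}} \<union> (\<lambda>\<Delta>. {\<alpha>} \<times> \<Delta>) ` Fb \<union> (\<lambda>\<Delta>. \<Delta> \<times> {\<alpha>}) ` Fb"

lemma Fb_sub: "\<Delta> \<in> Fb \<Longrightarrow> \<Delta> \<subseteq> \<Omega>'"
proof -
  assume "\<Delta> \<in> Fb"
  then have "Id_on \<Delta> \<subseteq> \<Omega>' \<times> \<Omega>'" using cc_sub[OF ccY] unfolding Fb_def by blast
  then show "\<Delta> \<subseteq> \<Omega>'" by blast
qed

lemma Fb_ne: "\<Delta> \<in> Fb \<Longrightarrow> \<Delta> \<noteq> {}"
  using ccD(3)[OF ccY] unfolding Fb_def by fastforce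

lemma Fb_disj: "\<Delta> \<in> Fb \<Longrightarrow> \<Delta>' \<in> Fb \<Longrightarrow> x \<in> \<Delta> \<Longrightarrow> x \<in> \<Delta>' \<Longrightarrow> \<Delta> = \<Delta>'"
  unfolding Fb_def using fib_disj[OF ccY] by blast

lemma Fb_cover: "x \<in> \<Omega>' \<Longrightarrow> \<exists>\<Delta>\<in>Fb. x \<in> \<Delta>"
  unfolding Fb_def using fib_exists[OF ccY] by blast

lemma Y_sub: "y \<in> Y \<Longrightarrow> y \<subseteq> \<Omega>' \<times> \<Omega>'"
  by (rule cc_sub[OF ccY])

lemma Z_cases:
  assumes z: "z \<in> Z" and ab: "(a, b) \<in> z"
  shows "(z \<in> Y \<and> a \<in> \<Omega>' \<and> b \<in> \<Omega>') \<or> (z = {(\<alpha>, \<alpha>)} \<and> a = \<alpha> \<and> b = \<alpha>) \<or>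
         (\<exists>\<Delta>\<in>Fb. z = {\<alpha>} \<times> \<Delta> \<and> a = \<alpha> \<and> b \<in> \<Delta>) \<or> (\<exists>\<Delta>\<in>Fb. z = \<Delta> \<times> {\<alpha>} \<and> a \<in> \<Delta> \<and> b = \<alpha>)"
proof -
  consider "z \<in> Y" | "z = {(\<alpha>, \<alpha>)}" | "z \<in> (\<lambda>\<Delta>. {\<alpha>} \<times> \<Delta>) ` Fb" | "z \<in> (\<lambda>\<Delta>. \<Delta> \<times> {\<alpha>}) ` Fb"
    using z unfolding Z_def by blast
  then show ?thesis
  proof cases
    case 1
    then have "a \<in> \<Omega>' \<and> b \<in> \<Omega>'" using Y_sub ab by blast
    then show ?thesis using 1 by blast
  next
    case 2
    then show ?thesis using ab by blast
  next
    case 3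
    then obtain \<Delta> where "\<Delta> \<in> Fb" "z = {\<alpha>} \<times> \<Delta>" by blast
    then show ?thesis using ab by blast
  next
    case 4
    then obtain \<Delta> where "\<Delta> \<in> Fb" "z = \<Delta> \<times> {\<alpha>}" by blast
    then show ?thesis using ab by blast
  qed
qed

lemma Z_disj: assumes "z1 \<in> Z" "z2 \<in> Z" "(a, b) \<in> z1" "(a, b) \<in> z2" shows "z1 = z2"
proof -
  have c1: "(z1 \<in> Y \<and> a \<in> \<Omega>' \<and> b \<in> \<Omega>') \<or> (z1 = {(\<alpha>, \<alpha>)} \<and> a = \<alpha> \<and> b = \<alpha>) \<or>
         (\<exists>\<Delta>\<in>Fb. z1 = {\<alpha>} \<times> \<Delta> \<and> a = \<alpha> \<and> b \<in> \<Delta>) \<or> (\<exists>\<Delta>\<in>Fb. z1 = \<Delta> \<times> {\<alpha>} \<and> a \<in> \<Delta> \<and> b = \<alpha>)"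
    using Z_cases[OF assms(1,3)] .
  have c2: "(z2 \<in> Y \<and> a \<in> \<Omega>' \<and> b \<in> \<Omega>') \<or> (z2 = {(\<alpha>, \<alpha>)} \<and> a = \<alpha> \<and> b = \<alpha>) \<or>
         (\<exists>\<Delta>\<in>Fb. z2 = {\<alpha>} \<times> \<Delta> \<and> a = \<alpha> \<and> b \<in> \<Delta>) \<or> (\<exists>\<Delta>\<in>Fb. z2 = \<Delta> \<times> {\<alpha>} \<and> a \<in> \<Delta> \<and> b = \<alpha>)"
    using Z_cases[OF assms(2,4)] .
  show ?thesis
  proof (cases "a = \<alpha>")
    case aT: True
    then have "a \<notin> \<Omega>'" using notin by simp
    show ?thesis
    proof (cases "b = \<alpha>")
      case True
      then have "b \<notin> \<Omega>'" using notin by simp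
      have n: "\<And>\<Delta>. \<Delta> \<in> Fb \<Longrightarrow> b \<notin> \<Delta>" using Fb_sub \<open>b \<notin> \<Omega>'\<close> by blast
      have n2: "\<And>\<Delta>. \<Delta> \<in> Fb \<Longrightarrow> a \<notin> \<Delta>" using Fb_sub \<open>a \<notin> \<Omega>'\<close> by blast
      have "z1 = {(\<alpha>, \<alpha>)}" using c1 n n2 \<open>a \<notin> \<Omega>'\<close> by blast
      moreover have "z2 = {(\<alpha>, \<alpha>)}" using c2 n n2 \<open>a \<notin> \<Omega>'\<close> by blast
      ultimately show ?thesis by simp
    next
      case False
      obtain \<Delta>1 where d1: "\<Delta>1 \<in> Fb" "z1 = {\<alpha>} \<times> \<Delta>1" "b \<in> \<Delta>1" using c1 aT False \<open>a \<notin> \<Omega>'\<close> by blast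
      obtain \<Delta>2 where d2: "\<Delta>2 \<in> Fb" "z2 = {\<alpha>} \<times> \<Delta>2" "b \<in> \<Delta>2" using c2 aT False \<open>a \<notin> \<Omega>'\<close> by blast
      have "\<Delta>1 = \<Delta>2" using Fb_disj d1 d2 by blast
      then show ?thesis using d1 d2 by simp
    qed
  next
    case aF: False
    show ?thesis
    proof (cases "b = \<alpha>")
      case True
      then have "b \<notin> \<Omega>'" using notin by simp
      obtain \<Delta>1 where d1: "\<Delta>1 \<in> Fb" "z1 = \<Delta>1 \<times> {\<alpha>}" "a \<in> \<Delta>1" using c1 aF True \<open>b \<notin> \<Omega>'\<close> by blast
      obtain \<Delta>2 where d2: "\<Delta>2 \<in> Fb" "z2 = \<Delta>2 \<times> {\<alpha>}" "a \<in> \<Delta>2" using c2 aF True \<open>b \<notin> \<Omega>'\<close> by blast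
      have "\<Delta>1 = \<Delta>2" using Fb_disj d1 d2 by blast
      then show ?thesis using d1 d2 by simp
    next
      case False
      have "z1 \<in> Y" using c1 aF False by blast
      moreover have "z2 \<in> Y" using c2 aF False by blast
      ultimately show ?thesis using cc_same[OF ccY] assms(3,4) by blast
    qed
  qed
qed

lemma Z_sub: "z \<in> Z \<Longrightarrow> z \<subseteq> insert \<alpha> \<Omega>' \<times> insert \<alpha> \<Omega>'"
proof
  fix p assume z: "z \<in> Z" and p: "p \<in> z"
  obtain a b where ab: "p = (a, b)" by (cases p)
  show "p \<in> insert \<alpha> \<Omega>' \<times> insert \<alpha> \<Omega>'" using Z_cases[OF z p[unfolded ab]] Fb_sub ab by blast
qed

definition zsim where "zsim a a' \<longleftrightarrow> (a = \<alpha> \<and> a' = \<alpha>) \<or> (\<exists>\<Delta>\<in>Fb. a \<in> \<Delta> \<and> a' \<in> \<Delta>)"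

lemma zsim_sym: "zsim a a' \<Longrightarrow> zsim a' a"
  unfolding zsim_def by blast

lemma Z_sim: assumes t: "t \<in> Z" and ab: "(a, b) \<in> t" and ab': "(a', b') \<in> t"
  shows "zsim a a' \<and> zsim b b'"
proof -
  consider (Y) "t \<in> Y" "a \<in> \<Omega>'" "b \<in> \<Omega>'" | (e) "t = {(\<alpha>, \<alpha>)}" |
    (L) \<Delta> where "\<Delta> \<in> Fb" "t = {\<alpha>} \<times> \<Delta>" | (R) \<Delta> where "\<Delta> \<in> Fb" "t = \<Delta> \<times> {\<alpha>}"
    using Z_cases[OF t ab] by blast
  then show ?thesis
  proof cases
    case Y
    obtain D1 where D1: "D1 \<in> Fb" "a \<in> D1" using Fb_cover Y(2) by blast
    obtain D2 where D2: "D2 \<in> Fb" "b \<in> D2" using Fb_cover Y(3) by blast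
    have "a' \<in> D1" using fib_fst[OF ccY Y(1) ab ab'] D1 unfolding Fb_def by blast
    moreover have "b' \<in> D2" using fib_snd[OF ccY Y(1) ab ab'] D2 unfolding Fb_def by blast
    ultimately show ?thesis unfolding zsim_def using D1 D2 by blast
  next
    case e
    then show ?thesis using ab ab' unfolding zsim_def by simp
  next
    case L
    then show ?thesis using ab ab' unfolding zsim_def by blast
  next
    case R
    then show ?thesis using ab ab' unfolding zsim_def by blast
  qed
qed

lemma Z_alpha_r: assumes r: "r \<in> Z" and a: "(a, \<alpha>) \<in> r" and s: "zsim a a'" shows "(a', \<alpha>) \<in> r"
proof -
  have nF: "\<And>\<Delta>. \<Delta> \<in> Fb \<Longrightarrow> \<alpha> \<notin> \<Delta>" using Fb_sub notin by blast
  consider (e) "r = {(\<alpha>, \<alpha>)}" "a = \<alpha>" | (R) \<Delta> where "\<Delta> \<in> Fb" "r = \<Delta> \<times> {\<alpha>}" "a \<in> \<Delta>"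
    using Z_cases[OF r a] notin nF by blast
  then show ?thesis
  proof cases
    case e
    then have "a' = \<alpha>" using s nF unfolding zsim_def by blast
    then show ?thesis using e by simp
  next
    case R
    then obtain D where D: "D \<in> Fb" "a \<in> D" "a' \<in> D" using s nF unfolding zsim_def by blast
    have "D = \<Delta>" using Fb_disj D R by blast
    then show ?thesis using R D by blast
  qed
qed

lemma Z_alpha_s: assumes r: "r \<in> Z" and a: "(\<alpha>, a) \<in> r" and s: "zsim a a'" shows "(\<alpha>, a') \<in> r"
proof -
  have nF: "\<And>\<Delta>. \<Delta> \<in> Fb \<Longrightarrow> \<alpha> \<notin> \<Delta>" using Fb_sub notin by blast
  consider (e) "r = {(\<alpha>, \<alpha>)}" "a = \<alpha>" | (L) \<Delta> where "\<Delta> \<in> Fb" "r = {\<alpha>} \<times> \<Delta>" "a \<in> \<Delta>"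
    using Z_cases[OF r a] notin nF by blast
  then show ?thesis
  proof cases
    case e
    then have "a' = \<alpha>" using s nF unfolding zsim_def by blast
    then show ?thesis using e by simp
  next
    case L
    then obtain D where D: "D \<in> Fb" "a \<in> D" "a' \<in> D" using s nF unfolding zsim_def by blast
    have "D = \<Delta>" using Fb_disj D L by blast
    then show ?thesis using L D by blast
  qed
qed

end

context ext begin

lemma Z_inY: assumes "z \<in> Z" "(a, b) \<in> z" "a \<in> \<Omega>'" "b \<in> \<Omega>'" shows "z \<in> Y"
  using Z_cases[OF assms(1,2)] assms(3,4) notin by blast

lemma Z_L: assumes "r \<in> Z" "(\<alpha>, c) \<in> r" "c \<in> \<Omega>'" shows "\<exists>\<Gamma>\<in>Fb. r = {\<alpha>} \<times> \<Gamma>"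
  using Z_cases[OF assms(1,2)] assms(3) notin by blast

lemma Z_R: assumes "r \<in> Z" "(c, \<alpha>) \<in> r" "c \<in> \<Omega>'" shows "\<exists>\<Gamma>\<in>Fb. r = \<Gamma> \<times> {\<alpha>}"
  using Z_cases[OF assms(1,2)] assms(3) notin by blast

lemma partII:
  assumes r: "r \<in> Z" and s: "s \<in> Z" and t: "t \<in> Z" and ab: "(a, b) \<in> t" and ab': "(a', b') \<in> t"
  shows "card {c\<in>\<Omega>'. (a, c) \<in> r \<and> (c, b) \<in> s} = card {c\<in>\<Omega>'. (a', c) \<in> r \<and> (c, b') \<in> s}"
proof -
  consider (Y) "t \<in> Y" "a \<in> \<Omega>'" "b \<in> \<Omega>'" | (e) "t = {(\<alpha>, \<alpha>)}" |
    (L) \<Delta> where "\<Delta> \<in> Fb" "t = {\<alpha>} \<times> \<Delta>" | (R) \<Delta> where "\<Delta> \<in> Fb" "t = \<Delta> \<times> {\<alpha>}"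
    using Z_cases[OF t ab] by blast
  then show ?thesis
  proof cases
    case Y
    have a'b': "a' \<in> \<Omega>'" "b' \<in> \<Omega>'" using Y_sub[OF Y(1)] ab' by blast+
    show ?thesis
    proof (cases "r \<in> Y \<and> s \<in> Y")
      case True
      have e: "\<And>x y. {c\<in>\<Omega>'. (x, c) \<in> r \<and> (c, y) \<in> s} = {c. (x, c) \<in> r \<and> (c, y) \<in> s}"
        using Y_sub True by blast
      have "cnt r s (a, b) = cnt r s (a', b')" using ccD(7)[OF ccY _ _ Y(1) ab ab'] True by blast
      then show ?thesis unfolding e cnt_def by simp
    next
      case False
      have em: "{c\<in>\<Omega>'. (x, c) \<in> r \<and> (c, y) \<in> s} = {}" if "x \<in> \<Omega>'" "y \<in> \<Omega>'" for x y
      proof (rule ccontr)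
        assume "{c\<in>\<Omega>'. (x, c) \<in> r \<and> (c, y) \<in> s} \<noteq> {}"
        then obtain c where c: "c \<in> \<Omega>'" "(x, c) \<in> r" "(c, y) \<in> s" by blast
        have "r \<in> Y" using Z_inY[OF r c(2) that(1) c(1)] .
        moreover have "s \<in> Y" using Z_inY[OF s c(3) c(1) that(2)] .
        ultimately show False using False by blast
      qed
      show ?thesis by (simp only: em[OF Y(2,3)] em[OF a'b'])
    qed
  next
    case e
    then show ?thesis using ab ab' by simp
  next
    case L
    have aa: "a = \<alpha>" "a' = \<alpha>" "b \<in> \<Delta>" "b' \<in> \<Delta>" using L ab ab' by blast+
    have bO: "b \<in> \<Omega>'" "b' \<in> \<Omega>'" using aa(3,4) Fb_sub L(1) by blast+
    show ?thesis
    proof (cases "(\<exists>\<Gamma>\<in>Fb. r = {\<alpha>} \<times> \<Gamma>) \<and> s \<in> Y")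
      case True
      then obtain \<Gamma> where G: "\<Gamma> \<in> Fb" "r = {\<alpha>} \<times> \<Gamma>" "s \<in> Y" by blast
      have GO: "\<Gamma> \<subseteq> \<Omega>'" using Fb_sub G(1) .
      have e: "\<And>y. {c\<in>\<Omega>'. (\<alpha>, c) \<in> r \<and> (c, y) \<in> s} = {c\<in>\<Gamma>. (y, c) \<in> converse s}"
        using G(2) GO by blast
      have "card {c\<in>\<Gamma>. (b, c) \<in> converse s} = card {c\<in>\<Gamma>. (b', c) \<in> converse s}"
        by (rule cntB[OF ccY ccD(6)[OF ccY G(3)]]) (use G(1) L(1) aa in \<open>auto simp: Fb_def\<close>)
      then show ?thesis unfolding aa(1,2) e .
    next
      case False
      have em: "{c\<in>\<Omega>'. (\<alpha>, c) \<in> r \<and> (c, y) \<in> s} = {}" if "y \<in> \<Omega>'" for y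
      proof (rule ccontr)
        assume "{c\<in>\<Omega>'. (\<alpha>, c) \<in> r \<and> (c, y) \<in> s} \<noteq> {}"
        then obtain c where c: "c \<in> \<Omega>'" "(\<alpha>, c) \<in> r" "(c, y) \<in> s" by blast
        have "\<exists>\<Gamma>\<in>Fb. r = {\<alpha>} \<times> \<Gamma>" using Z_L[OF r c(2) c(1)] .
        moreover have "s \<in> Y" using Z_inY[OF s c(3) c(1) that] .
        ultimately show False using False by blast
      qed
      show ?thesis unfolding aa(1,2) by (simp only: em[OF bO(1)] em[OF bO(2)])
    qed
  next
    case R
    have aa: "b = \<alpha>" "b' = \<alpha>" "a \<in> \<Delta>" "a' \<in> \<Delta>" using R ab ab' by blast+
    have aO: "a \<in> \<Omega>'" "a' \<in> \<Omega>'" using aa(3,4) Fb_sub R(1) by blast+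
    show ?thesis
    proof (cases "(\<exists>\<Gamma>\<in>Fb. s = \<Gamma> \<times> {\<alpha>}) \<and> r \<in> Y")
      case True
      then obtain \<Gamma> where G: "\<Gamma> \<in> Fb" "s = \<Gamma> \<times> {\<alpha>}" "r \<in> Y" by blast
      have GO: "\<Gamma> \<subseteq> \<Omega>'" using Fb_sub G(1) .
      have e: "\<And>x. {c\<in>\<Omega>'. (x, c) \<in> r \<and> (c, \<alpha>) \<in> s} = {c\<in>\<Gamma>. (x, c) \<in> r}"
        using G(2) GO by blast
      have "card {c\<in>\<Gamma>. (a, c) \<in> r} = card {c\<in>\<Gamma>. (a', c) \<in> r}"
        by (rule cntB[OF ccY G(3)]) (use G(1) R(1) aa in \<open>auto simp: Fb_def\<close>)
      then show ?thesis unfolding aa(1,2) e .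
    next
      case False
      have em: "{c\<in>\<Omega>'. (x, c) \<in> r \<and> (c, \<alpha>) \<in> s} = {}" if "x \<in> \<Omega>'" for x
      proof (rule ccontr)
        assume "{c\<in>\<Omega>'. (x, c) \<in> r \<and> (c, \<alpha>) \<in> s} \<noteq> {}"
        then obtain c where c: "c \<in> \<Omega>'" "(x, c) \<in> r" "(c, \<alpha>) \<in> s" by blast
        have "\<exists>\<Gamma>\<in>Fb. s = \<Gamma> \<times> {\<alpha>}" using Z_R[OF s c(3) c(1)] .
        moreover have "r \<in> Y" using Z_inY[OF r c(2) that c(1)] .
        ultimately show False using False by blast
      qed
      show ?thesis unfolding aa(1,2) by (simp only: em[OF aO(1)] em[OF aO(2)])
    qed
  qed
qed

lemma card_split:
  assumes r: "r \<in> Z"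
  shows "card {c. (a, c) \<in> r \<and> (c, b) \<in> s} =
         card {c\<in>\<Omega>'. (a, c) \<in> r \<and> (c, b) \<in> s} + (if (a, \<alpha>) \<in> r \<and> (\<alpha>, b) \<in> s then 1 else 0)"
proof -
  have fin: "finite \<Omega>'" using ccD(1)[OF ccY] .
  have sub: "{c. (a, c) \<in> r \<and> (c, b) \<in> s} \<subseteq> insert \<alpha> \<Omega>'" using Z_sub[OF r] by blast
  have eq: "{c. (a, c) \<in> r \<and> (c, b) \<in> s} = {c\<in>\<Omega>'. (a, c) \<in> r \<and> (c, b) \<in> s} \<union>
      (if (a, \<alpha>) \<in> r \<and> (\<alpha>, b) \<in> s then {\<alpha>} else {})"
    using sub by auto
  have dis: "{c\<in>\<Omega>'. (a, c) \<in> r \<and> (c, b) \<in> s} \<inter> (if (a, \<alpha>) \<in> r \<and> (\<alpha>, b) \<in> s then {\<alpha>} else {}) = {}"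
    using notin by auto
  have "card ({c\<in>\<Omega>'. (a, c) \<in> r \<and> (c, b) \<in> s} \<union> (if (a, \<alpha>) \<in> r \<and> (\<alpha>, b) \<in> s then {\<alpha>} else {}))
     = card {c\<in>\<Omega>'. (a, c) \<in> r \<and> (c, b) \<in> s} + card (if (a, \<alpha>) \<in> r \<and> (\<alpha>, b) \<in> s then {\<alpha>} else {})"
    by (rule card_Un_disjoint) (use fin dis in auto)
  then show ?thesis unfolding eq by simp
qed

lemma partI:
  assumes r: "r \<in> Z" and s: "s \<in> Z" and t: "t \<in> Z" and ab: "(a, b) \<in> t" and ab': "(a', b') \<in> t"
  shows "((a, \<alpha>) \<in> r \<and> (\<alpha>, b) \<in> s) \<longleftrightarrow> ((a', \<alpha>) \<in> r \<and> (\<alpha>, b') \<in> s)"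
proof -
  have z: "zsim a a'" "zsim b b'" using Z_sim[OF t ab ab'] by simp_all
  show ?thesis
    using Z_alpha_r[OF r _ z(1)] Z_alpha_r[OF r _ zsim_sym[OF z(1)]]
      Z_alpha_s[OF s _ z(2)] Z_alpha_s[OF s _ zsim_sym[OF z(2)]] by blast
qed

lemma Z_cc: "coherent_config (insert \<alpha> \<Omega>') Z"
  unfolding coherent_config_def
proof (intro conjI)
  show "finite (insert \<alpha> \<Omega>')" using ccD(1)[OF ccY] by simp
  show "\<Union>Z = insert \<alpha> \<Omega>' \<times> insert \<alpha> \<Omega>'"
  proof
    show "\<Union>Z \<subseteq> insert \<alpha> \<Omega>' \<times> insert \<alpha> \<Omega>'" using Z_sub by blast
    show "insert \<alpha> \<Omega>' \<times> insert \<alpha> \<Omega>' \<subseteq> \<Union>Z"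
    proof
      fix p assume p: "p \<in> insert \<alpha> \<Omega>' \<times> insert \<alpha> \<Omega>'"
      obtain a b where ab: "p = (a, b)" by (cases p)
      have a: "a = \<alpha> \<or> a \<in> \<Omega>'" and b: "b = \<alpha> \<or> b \<in> \<Omega>'" using p ab by auto
      show "p \<in> \<Union>Z"
      proof (cases "a = \<alpha>")
        case True
        show ?thesis
        proof (cases "b = \<alpha>")
          case True
          then show ?thesis using \<open>a = \<alpha>\<close> ab unfolding Z_def by blast
        next
          case False
          then obtain D where "D \<in> Fb" "b \<in> D" using Fb_cover b by blast
          then have "{\<alpha>} \<times> D \<in> Z" "p \<in> {\<alpha>} \<times> D" using \<open>a = \<alpha>\<close> ab unfolding Z_def by blast+
          then show ?thesis by blast
        qed
      next
        case aF: False
        then have aO: "a \<in> \<Omega>'" using a by simp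
        show ?thesis
        proof (cases "b = \<alpha>")
          case True
          obtain D where "D \<in> Fb" "a \<in> D" using Fb_cover aO by blast
          then have "D \<times> {\<alpha>} \<in> Z" "p \<in> D \<times> {\<alpha>}" using True ab unfolding Z_def by blast+
          then show ?thesis by blast
        next
          case False
          then have "p \<in> \<Omega>' \<times> \<Omega>'" using aO b ab by simp
          then have "p \<in> \<Union>Y" using ccD(2)[OF ccY] by simp
          then show ?thesis unfolding Z_def by blast
        qed
      qed
    qed
  qed
  show "{} \<notin> Z"
  proof
    assume "{} \<in> Z"
    then consider "{} \<in> Y" | "{} = {(\<alpha>, \<alpha>)}" | "{} \<in> (\<lambda>\<Delta>. {\<alpha>} \<times> \<Delta>) ` Fb" | "{} \<in> (\<lambda>\<Delta>. \<Delta> \<times> {\<alpha>}) ` Fb"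
      unfolding Z_def by blast
    then show False
    proof cases
      case 1 then show False using ccD(3)[OF ccY] by blast
    next
      case 2 then show False by simp
    next
      case 3 then show False using Fb_ne by blast
    next
      case 4 then show False using Fb_ne by blast
    qed
  qed
  show "\<forall>s\<in>Z. \<forall>t\<in>Z. s \<noteq> t \<longrightarrow> s \<inter> t = {}"
  proof (intro ballI impI)
    fix s t assume st: "s \<in> Z" "t \<in> Z" "s \<noteq> t"
    show "s \<inter> t = {}"
    proof (rule ccontr)
      assume "s \<inter> t \<noteq> {}"
      then obtain a b where "(a, b) \<in> s" "(a, b) \<in> t" by auto
      then show False using Z_disj[OF st(1,2)] st(3) by blast
    qed
  qed
  show "\<exists>T\<subseteq>Z. Id_on (insert \<alpha> \<Omega>') = \<Union>T"
  proof -
    obtain T0 where T0: "T0 \<subseteq> Y" "Id_on \<Omega>' = \<Union>T0" using ccD(5)[OF ccY] by blast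
    have "insert {(\<alpha>, \<alpha>)} T0 \<subseteq> Z" using T0(1) unfolding Z_def by blast
    moreover have "Id_on (insert \<alpha> \<Omega>') = \<Union>(insert {(\<alpha>, \<alpha>)} T0)"
      using T0(2) by (auto simp: Id_on_def)
    ultimately show ?thesis by blast
  qed
  show "\<forall>s\<in>Z. s\<inverse> \<in> Z"
  proof
    fix s assume "s \<in> Z"
    then consider "s \<in> Y" | "s = {(\<alpha>, \<alpha>)}" | D where "D \<in> Fb" "s = {\<alpha>} \<times> D" | D where "D \<in> Fb" "s = D \<times> {\<alpha>}"
      unfolding Z_def by blast
    then show "s\<inverse> \<in> Z"
    proof cases
      case 1 then show ?thesis using ccD(6)[OF ccY] unfolding Z_def by blast
    next
      case 2
      then have "s\<inverse> = {(\<alpha>, \<alpha>)}" by auto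
      then show ?thesis unfolding Z_def by blast
    next
      case 3
      then have "s\<inverse> = D \<times> {\<alpha>}" by auto
      then show ?thesis using 3(1) unfolding Z_def by blast
    next
      case 4
      then have "s\<inverse> = {\<alpha>} \<times> D" by auto
      then show ?thesis using 4(1) unfolding Z_def by blast
    qed
  qed
  show "\<forall>r\<in>Z. \<forall>s\<in>Z. \<forall>t\<in>Z. \<forall>x\<in>t. \<forall>y\<in>t.
        card {c. (fst x, c) \<in> r \<and> (c, snd x) \<in> s} = card {c. (fst y, c) \<in> r \<and> (c, snd y) \<in> s}"
  proof (intro ballI)
    fix r s t x y assume r: "r \<in> Z" and s: "s \<in> Z" and t: "t \<in> Z" and x: "x \<in> t" and y: "y \<in> t"
    obtain a b where ab: "x = (a, b)" by (cases x)
    obtain a' b' where ab': "y = (a', b')" by (cases y)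
    have xt: "(a, b) \<in> t" and yt: "(a', b') \<in> t" using x y ab ab' by simp_all
    show "card {c. (fst x, c) \<in> r \<and> (c, snd x) \<in> s} = card {c. (fst y, c) \<in> r \<and> (c, snd y) \<in> s}"
      unfolding ab ab' fst_conv snd_conv card_split[OF r] partII[OF r s t xt yt] partI[OF r s t xt yt] ..
  qed
qed

end

lemma complete_rel: assumes cc: "coherent_config \<Omega> T" and c: "is_complete T" and r: "r \<subseteq> \<Omega> \<times> \<Omega>"
  shows "is_relation T r"
  unfolding rel_cc[OF cc]
proof (intro conjI ballI impI)
  show "r \<subseteq> \<Omega> \<times> \<Omega>" by (rule r)
  fix z assume z: "z \<in> T" "z \<inter> r \<noteq> {}"
  obtain q where "z = {q}" using c z(1) unfolding is_complete_def by blast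
  then show "z \<subseteq> r" using z(2) by blast
qed

lemma fiber_single: assumes cc: "coherent_config \<Omega> P" and u: "union_of_fibers P {\<alpha>}"
  shows "Id_on {\<alpha>} \<in> P"
proof -
  obtain F where F: "\<forall>\<Delta>\<in>F. is_fiber P \<Delta>" "{\<alpha>} = \<Union>F" using u unfolding union_of_fibers_def by blast
  obtain D where D: "D \<in> F" "\<alpha> \<in> D" using F(2) by blast
  have "D \<subseteq> {\<alpha>}" using D(1) F(2) by blast
  then have "D = {\<alpha>}" using D(2) by blast
  then show ?thesis using F(1) D(1) unfolding is_fiber_def by blast
qed

lemma Y_complete:
  assumes cc: "coherent_config \<Omega> S" and sub: "\<Pi> \<subseteq> Pow \<Omega>" and a: "\<alpha> \<in> \<Omega>"
    and gb: "generalized_base \<Omega> S \<Pi>"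
    and Yf: "is_fission (\<Omega> - {\<alpha>}) (restrict_cc (point_ext \<Omega> S \<alpha>) (\<Omega> - {\<alpha>})) Y"
    and Yp: "\<forall>\<Gamma>'\<in>(\<lambda>\<Gamma>. \<Gamma> - {\<alpha>}) ` \<Pi>. union_of_fibers Y \<Gamma>'"
  shows "is_complete Y"
proof -
  define \<Omega>' where "\<Omega>' = \<Omega> - {\<alpha>}"
  have OO: "\<Omega> = insert \<alpha> \<Omega>'" unfolding \<Omega>'_def using a by blast
  have notin: "\<alpha> \<notin> \<Omega>'" unfolding \<Omega>'_def by blast
  define P where "P = point_ext \<Omega> S \<alpha>"
  define S1 where "S1 = restrict_cc P \<Omega>'"
  have PP: "is_Pi_fission \<Omega> S {{\<alpha>}} P" unfolding P_def point_ext_def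
    by (rule Pi_fission_ok[OF cc]) (use a in blast)
  have ccP: "coherent_config \<Omega> P" using PP unfolding is_Pi_fission_def is_fission_def by blast
  have PS: "\<And>r. is_relation S r \<Longrightarrow> is_relation P r" using PP unfolding is_Pi_fission_def is_fission_def by blast
  have aP: "Id_on {\<alpha>} \<in> P" using fiber_single[OF ccP] PP unfolding is_Pi_fission_def by blast
  have ccY: "coherent_config \<Omega>' Y" using Yf unfolding is_fission_def \<Omega>'_def by blast
  have S1Y: "\<And>r. is_relation S1 r \<Longrightarrow> is_relation Y r"
    using Yf unfolding is_fission_def S1_def P_def \<Omega>'_def by blast
  interpret ext \<Omega>' Y \<alpha> using ccY notin by unfold_locales
  have ccZ: "coherent_config \<Omega> Z" unfolding OO by (rule Z_cc)
  have inS1: "q \<inter> (\<Omega>' \<times> \<Omega>') \<in> S1" if "q \<in> P" "q \<inter> (\<Omega>' \<times> \<Omega>') \<noteq> {}" for q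
    unfolding S1_def restrict_cc_def using that by blast
  have Lhelp: "(\<alpha>, y') \<in> q" if q: "q \<in> P" and ay: "(\<alpha>, y) \<in> q" and D: "D \<in> Fb" and y: "y \<in> D" and y': "y' \<in> D"
    for q y y' D
  proof -
    have yO: "y \<in> \<Omega>'" using subsetD[OF Fb_sub[OF D] y] .
    have yOm: "y \<in> \<Omega>" using yO unfolding \<Omega>'_def by simp
    obtain \<Phi> where \<Phi>: "Id_on \<Phi> \<in> P" "y \<in> \<Phi>" using fib_exists[OF ccP yOm] by (elim exE conjE)
    have "\<alpha> \<notin> \<Phi>"
    proof
      assume h: "\<alpha> \<in> \<Phi>"
      have "\<alpha> \<in> {\<alpha>}" by simp
      then have "{\<alpha>} = \<Phi>" using fib_disj[OF ccP aP \<Phi>(1) _ h] by simp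
      then have "\<Phi> = {\<alpha>}" by (rule sym)
      then have "y = \<alpha>" using \<Phi>(2) by simp
      then show False using yO notin by simp
    qed
    have PhO: "Id_on \<Phi> \<subseteq> \<Omega> \<times> \<Omega>" using cc_sub[OF ccP \<Phi>(1)] .
    have PhO': "Id_on \<Phi> \<subseteq> \<Omega>' \<times> \<Omega>'"
    proof
      fix p assume p: "p \<in> Id_on \<Phi>"
      then obtain x where x: "p = (x, x)" "x \<in> \<Phi>" by (rule Id_onE) simp
      have "(x, x) \<in> \<Omega> \<times> \<Omega>" using subsetD[OF PhO p] x(1) by simp
      then have "x \<in> \<Omega>" by simp
      moreover have "x \<noteq> \<alpha>" using x(2) \<open>\<alpha> \<notin> \<Phi>\<close> by auto
      ultimately show "p \<in> \<Omega>' \<times> \<Omega>'" unfolding \<Omega>'_def x(1) by simp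
    qed
    then have eqI: "Id_on \<Phi> \<inter> (\<Omega>' \<times> \<Omega>') = Id_on \<Phi>" by (rule Int_absorb2)
    have "(y, y) \<in> Id_on \<Phi>" using \<Phi>(2) by (rule Id_onI)
    then have ne: "Id_on \<Phi> \<inter> (\<Omega>' \<times> \<Omega>') \<noteq> {}" unfolding eqI by auto
    have "Id_on \<Phi> \<in> S1" using inS1[OF \<Phi>(1) ne] unfolding eqI .
    then have "is_relation S1 (Id_on \<Phi>)" by (rule rel_single)
    then have rY: "is_relation Y (Id_on \<Phi>)" by (rule S1Y)
    then have rY2: "\<forall>z\<in>Y. z \<inter> Id_on \<Phi> \<noteq> {} \<longrightarrow> z \<subseteq> Id_on \<Phi>" unfolding rel_cc[OF ccY] by simp
    have DY: "Id_on D \<in> Y" using D unfolding Fb_def by simp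
    have "(y, y) \<in> Id_on D \<inter> Id_on \<Phi>" using Id_onI[OF y] Id_onI[OF \<Phi>(2)] by (rule IntI)
    then have "Id_on D \<inter> Id_on \<Phi> \<noteq> {}" by auto
    then have "Id_on D \<subseteq> Id_on \<Phi>" using rY2 DY by simp
    moreover have "(y', y') \<in> Id_on D" using y' by (rule Id_onI)
    ultimately have "(y', y') \<in> Id_on \<Phi>" by (rule subsetD)
    then have "y' \<in> \<Phi>" by blast
    then show ?thesis by (rule ptC[OF ccP aP q ay \<Phi>])
  qed
  have claim1: "is_relation Z q" if q: "q \<in> P" for q
    unfolding rel_cc[OF ccZ]
  proof (intro conjI ballI impI)
    show "q \<subseteq> \<Omega> \<times> \<Omega>" using cc_sub[OF ccP q] .
    fix z assume z: "z \<in> Z" "z \<inter> q \<noteq> {}"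
    then obtain a b where ab: "(a, b) \<in> z" "(a, b) \<in> q" by auto
    consider (Y) "z \<in> Y" "a \<in> \<Omega>'" "b \<in> \<Omega>'" | (e) "z = {(\<alpha>, \<alpha>)}" "a = \<alpha>" "b = \<alpha>" |
      (L) \<Delta> where "\<Delta> \<in> Fb" "z = {\<alpha>} \<times> \<Delta>" "a = \<alpha>" "b \<in> \<Delta>" |
      (R) \<Delta> where "\<Delta> \<in> Fb" "z = \<Delta> \<times> {\<alpha>}" "a \<in> \<Delta>" "b = \<alpha>"
      using Z_cases[OF z(1) ab(1)] by blast
    then show "z \<subseteq> q"
    proof cases
      case Y
      have ne: "q \<inter> (\<Omega>' \<times> \<Omega>') \<noteq> {}" using ab(2) Y by blast
      have "is_relation Y (q \<inter> (\<Omega>' \<times> \<Omega>'))" using S1Y rel_single inS1[OF q ne] by blast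
      moreover have "z \<inter> (q \<inter> (\<Omega>' \<times> \<Omega>')) \<noteq> {}" using ab Y by blast
      ultimately have "z \<subseteq> q \<inter> (\<Omega>' \<times> \<Omega>')" using Y(1) unfolding rel_cc[OF ccY] by blast
      then show ?thesis by blast
    next
      case e
      then show ?thesis using ab by blast
    next
      case L
      have "\<forall>y'\<in>\<Delta>. (\<alpha>, y') \<in> q" using Lhelp[OF q _ L(1) L(4)] ab(2) L(3) by blast
      then show ?thesis using L(2) by blast
    next
      case R
      have qc: "converse q \<in> P" using ccD(6)[OF ccP q] .
      have "(\<alpha>, a) \<in> converse q" using ab(2) R(4) by simp
      then have "\<forall>y'\<in>\<Delta>. (\<alpha>, y') \<in> converse q" using Lhelp[OF qc _ R(1) R(3)] by blast
      then show ?thesis using R(2) by blast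
    qed
  qed
  have claim2: "is_relation Z r" if r: "is_relation S r" for r
  proof -
    obtain T where T: "T \<subseteq> S" "r = \<Union>T" using r unfolding is_relation_def by blast
    have "\<forall>t\<in>T. is_relation Z t"
    proof
      fix t assume "t \<in> T"
      then have "is_relation P t" using PS rel_single T(1) by blast
      then obtain T' where T': "T' \<subseteq> P" "t = \<Union>T'" unfolding is_relation_def by blast
      have "\<forall>q\<in>T'. is_relation Z q" using claim1 T'(1) by blast
      then show "is_relation Z t" using rel_Union T'(2) by blast
    qed
    then show ?thesis using rel_Union T(2) by blast
  qed
  have claim3: "union_of_fibers Z \<Gamma>" if G: "\<Gamma> \<in> \<Pi>" for \<Gamma>
  proof -
    have "union_of_fibers Y (\<Gamma> - {\<alpha>})" using Yp G by blast
    then obtain F where F: "\<forall>\<Delta>\<in>F. is_fiber Y \<Delta>" "\<Gamma> - {\<alpha>} = \<Union>F" unfolding union_of_fibers_def by blast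
    define F' where "F' = F \<union> (if \<alpha> \<in> \<Gamma> then {{\<alpha>}} else {})"
    have "\<forall>\<Delta>\<in>F'. is_fiber Z \<Delta>"
    proof
      fix \<Delta> assume "\<Delta> \<in> F'"
      then consider "\<Delta> \<in> F" | "\<Delta> = {\<alpha>}" unfolding F'_def by (auto split: if_splits)
      then show "is_fiber Z \<Delta>"
      proof cases
        case 1 then show ?thesis using F(1) unfolding is_fiber_def Z_def by blast
      next
        case 2
        have "Id_on {\<alpha>} = {(\<alpha>, \<alpha>)}" by auto
        then show ?thesis unfolding is_fiber_def Z_def 2 by simp
      qed
    qed
    moreover have "\<Gamma> = \<Union>F'" using F(2) unfolding F'_def by auto
    ultimately show ?thesis unfolding union_of_fibers_def by blast
  qed
  have fisZ: "is_fission \<Omega> S Z" unfolding is_fission_def using ccZ claim2 by blast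
  define Pc where "Pc = Pi_fission \<Omega> S \<Pi>"
  have PcP: "is_Pi_fission \<Omega> S \<Pi> Pc" unfolding Pc_def by (rule Pi_fission_ok[OF cc sub])
  have PcZ: "is_fission \<Omega> Pc Z" using PcP fisZ claim3 unfolding is_Pi_fission_def by blast
  have ccPc: "coherent_config \<Omega> Pc" using PcP unfolding is_Pi_fission_def is_fission_def by blast
  have compPc: "is_complete Pc" using gb unfolding generalized_base_def Pc_def .
  show "is_complete Y" unfolding is_complete_def
  proof
    fix y assume y: "y \<in> Y"
    have "y \<noteq> {}" using ccD(3)[OF ccY] y by blast
    then obtain p where p: "p \<in> y" by blast
    have pO: "p \<in> \<Omega> \<times> \<Omega>" using Y_sub[OF y] p OO by blast
    then obtain pc where pc: "pc \<in> Pc" "p \<in> pc" using ccD(2)[OF ccPc] by blast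
    obtain q where "pc = {q}" using compPc pc(1) unfolding is_complete_def by blast
    then have "{p} \<in> Pc" using pc by simp
    then have "is_relation Z {p}" using PcZ rel_single unfolding is_fission_def by blast
    moreover have "y \<in> Z" using y unfolding Z_def by blast
    ultimately have "y \<subseteq> {p}" using p unfolding rel_cc[OF ccZ] by blast
    then show "\<exists>p. y = {p}" using p by blast
  qed
qed

theorem lemma3p1:
  fixes \<Omega> :: "'a set" and S :: "('a \<times> 'a) set set" and \<Pi> :: "'a set set" and \<alpha> :: 'a
  assumes "coherent_config \<Omega> S"
    and "\<Pi> \<subseteq> Pow \<Omega>"
    and "generalized_base \<Omega> S \<Pi>"
    and "\<alpha> \<in> \<Omega>"
  shows "generalized_base (\<Omega> - {\<alpha>}) (restrict_cc (point_ext \<Omega> S \<alpha>) (\<Omega> - {\<alpha>}))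
           ((\<lambda>\<Gamma>. \<Gamma> - {\<alpha>}) ` \<Pi>)"
proof -
  define \<Omega>' where "\<Omega>' = \<Omega> - {\<alpha>}"
  define S1 where "S1 = restrict_cc (point_ext \<Omega> S \<alpha>) \<Omega>'"
  define \<Pi>' where "\<Pi>' = (\<lambda>\<Gamma>. \<Gamma> - {\<alpha>}) ` \<Pi>"
  have finO': "finite \<Omega>'" unfolding \<Omega>'_def using ccD(1)[OF assms(1)] by simp
  have ccC: "coherent_config \<Omega>' (compl \<Omega>')" by (rule cc_compl[OF finO'])
  have main: "is_complete S''" if h: "is_fission \<Omega>' S1 S'' \<and> (\<forall>\<Gamma>'\<in>\<Pi>'. union_of_fibers S'' \<Gamma>')" for S''
  proof -
    have h1: "is_fission (\<Omega> - {\<alpha>}) (restrict_cc (point_ext \<Omega> S \<alpha>) (\<Omega> - {\<alpha>})) S''"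
      using h[THEN conjunct1] unfolding \<Omega>'_def S1_def .
    have h2: "\<forall>\<Gamma>'\<in>(\<lambda>\<Gamma>. \<Gamma> - {\<alpha>}) ` \<Pi>. union_of_fibers S'' \<Gamma>'"
      using h[THEN conjunct2] unfolding \<Pi>'_def .
    show ?thesis by (rule Y_complete[OF assms(1,2,4,3) h1 h2])
  qed
  have S1sub: "r \<subseteq> \<Omega>' \<times> \<Omega>'" if "is_relation S1 r" for r
  proof -
    have "\<exists>T\<subseteq>S1. r = \<Union>T" using that by (simp only: is_relation_def)
    then obtain T where T: "T \<subseteq> S1" "r = \<Union>T" by (elim exE conjE)
    have all: "t \<subseteq> \<Omega>' \<times> \<Omega>'" if "t \<in> S1" for t
    proof -
      have "t \<in> (\<lambda>s. s \<inter> (\<Omega>' \<times> \<Omega>')) ` (point_ext \<Omega> S \<alpha>)"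
        using that unfolding S1_def restrict_cc_def by (rule DiffD1)
      then obtain s where "t = s \<inter> (\<Omega>' \<times> \<Omega>')" by (rule imageE)
      then show ?thesis by simp
    qed
    show ?thesis unfolding T(2)
    proof (rule Union_least)
      fix t assume "t \<in> T"
      have "t \<in> S1" using T(1) \<open>t \<in> T\<close> by (rule subsetD)
      then show "t \<subseteq> \<Omega>' \<times> \<Omega>'" by (rule all)
    qed
  qed
  have PiC: "is_Pi_fission \<Omega>' S1 \<Pi>' (compl \<Omega>')"
    unfolding is_Pi_fission_def
  proof (intro conjI ballI allI impI)
    show "is_fission \<Omega>' S1 (compl \<Omega>')" unfolding is_fission_def
    proof (intro conjI allI impI)
      show "coherent_config \<Omega>' (compl \<Omega>')" by (rule ccC)
      fix r assume "is_relation S1 r"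
      then show "is_relation (compl \<Omega>') r" by (rule compl_rel[OF S1sub])
    qed
  next
    fix \<Gamma>' assume "\<Gamma>' \<in> \<Pi>'"
    then obtain \<Gamma> where G: "\<Gamma> \<in> \<Pi>" "\<Gamma>' = \<Gamma> - {\<alpha>}" unfolding \<Pi>'_def by auto
    have "\<Gamma> \<subseteq> \<Omega>" using G(1) assms(2) by auto
    then have "\<Gamma>' \<subseteq> \<Omega>'" unfolding G(2) \<Omega>'_def by auto
    then show "union_of_fibers (compl \<Omega>') \<Gamma>'" by (rule compl_fiber)
  next
    fix S'' assume h: "is_fission \<Omega>' S1 S'' \<and> (\<forall>\<Gamma>'\<in>\<Pi>'. union_of_fibers S'' \<Gamma>')"
    have c: "is_complete S''" by (rule main[OF h])
    have cc'': "coherent_config \<Omega>' S''" using h unfolding is_fission_def by blast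
    show "is_fission \<Omega>' (compl \<Omega>') S''" unfolding is_fission_def
    proof (intro conjI allI impI)
      show "coherent_config \<Omega>' S''" by (rule cc'')
      fix r assume "is_relation (compl \<Omega>') r"
      then have "r \<subseteq> \<Omega>' \<times> \<Omega>'" by (rule rel_sub[OF ccC])
      then show "is_relation S'' r" by (rule complete_rel[OF cc'' c])
    qed
  qed
  have "Pi_fission \<Omega>' S1 \<Pi>' = compl \<Omega>'"
    unfolding Pi_fission_def by (rule the_equality) (rule PiC, rule Pi_unique[OF _ PiC])
  moreover have "is_complete (compl \<Omega>')" unfolding is_complete_def compl_def by auto
  ultimately show ?thesis unfolding generalized_base_def \<Omega>'_def S1_def \<Pi>'_def by simp
qed

end
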